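(* Let $m\ge1$ and consider $Q_{2,m+1}$ with dimension vector $\alpha=(m,1;1,\dots,1)$ ($m+1$ sinks, each of dimension $1$). Then the graded ring of semi-invariants $\bigoplus_{k\ge0}\{f\in\mathbb{C}[\mathrm{Rep}_\alpha Q]: f(g\cdot V)=\chi_\theta(g)^kf(V)\ \forall g\}$ is a polynomial ring in $m+1$ algebraically independent generators of degree $1$; consequently $M^{ss}_\alpha(Q_{2,m+1},\theta)\cong\mathbb{P}^m$.
   Context: $Q_{p,q}$ is the bipartite quiver with $p$ source vertices $v_1,\dots,v_p$, $q$ sink vertices $w_1,\dots,w_q$, and exactly one arrow from each $v_i$ to each $w_j$; a dimension vector is written $\alpha=(a_1,\dots,a_p;b_1,\dots,b_q)$, $\mathrm{Rep}_\alpha Q=\prod_{i,j}\mathrm{Hom}_{\mathbb{C}}(\mathbb{C}^{a_i},\mathbb{C}^{b_j})$, and $\mathrm{GL}_\alpha=\prod_i\mathrm{GL}_{a_i}\times\prod_j\mathrm{GL}_{b_j}$ acts by base change. $\theta=(-1,\dots,-1;1,\dots,1)$, $\chi_\theta(g)=\prod_i\det(g_i)^{-1}\prod_j\det(h_j)$ for $g=(g_1,\dots,g_p;h_1,\dots,h_q)$, and $M^{ss}_\alpha(Q,\theta)=\mathrm{Proj}$ of the graded ring of semi-invariants of weights $\chi_\theta^k$, $k\ge0$ (the moduli space of $\theta$-semistable representations). *)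

theory Defs
  imports Complex_Main "Jordan_Normal_Form.Gauss_Jordan_Elimination" "Jordan_Normal_Form.Determinant"
begin

text \<open>Bipartite quiver Q_{p,q}: sources v_0..v_{p-1}, sinks w_0..w_{q-1}, one arrow
  v_i -> w_j for each i < p, j < q.  A representation V assigns to the arrow v_i -> w_j a
  complex (b j) x (a i) matrix V i j.\<close>

type_synonym qrep = "nat \<Rightarrow> nat \<Rightarrow> complex mat"

definition Rep :: "nat \<Rightarrow> nat \<Rightarrow> (nat \<Rightarrow> nat) \<Rightarrow> (nat \<Rightarrow> nat) \<Rightarrow> qrep set" where
  "Rep p q a b = {V. \<forall>i<p. \<forall>j<q. V i j \<in> carrier_mat (b j) (a i)}"

inductive polyfun :: "nat \<Rightarrow> nat \<Rightarrow> (nat \<Rightarrow> nat) \<Rightarrow> (nat \<Rightarrow> nat) \<Rightarrow> (qrep \<Rightarrow> complex) \<Rightarrow> bool"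
  for p q a b where
  pf_const: "polyfun p q a b (\<lambda>V. c)"
| pf_coord: "i < p \<Longrightarrow> j < q \<Longrightarrow> r < b j \<Longrightarrow> s < a i \<Longrightarrow> polyfun p q a b (\<lambda>V. V i j $$ (r, s))"
| pf_add: "polyfun p q a b f \<Longrightarrow> polyfun p q a b g \<Longrightarrow> polyfun p q a b (\<lambda>V. f V + g V)"
| pf_mult: "polyfun p q a b f \<Longrightarrow> polyfun p q a b g \<Longrightarrow> polyfun p q a b (\<lambda>V. f V * g V)"

definition GL :: "nat \<Rightarrow> nat \<Rightarrow> (nat \<Rightarrow> nat) \<Rightarrow> (nat \<Rightarrow> nat)
    \<Rightarrow> ((nat \<Rightarrow> complex mat) \<times> (nat \<Rightarrow> complex mat)) set" where
  "GL p q a b = {(g, h). (\<forall>i<p. g i \<in> carrier_mat (a i) (a i) \<and> det (g i) \<noteq> 0)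
                      \<and> (\<forall>j<q. h j \<in> carrier_mat (b j) (b j) \<and> det (h j) \<noteq> 0)}"

definition minv :: "complex mat \<Rightarrow> complex mat" where
  "minv M = the (mat_inverse M)"

definition act :: "(nat \<Rightarrow> complex mat) \<times> (nat \<Rightarrow> complex mat) \<Rightarrow> qrep \<Rightarrow> qrep" where
  "act gh V = (\<lambda>i j. snd gh j * V i j * minv (fst gh i))"

text \<open>chi_theta for theta = (-1,...,-1; 1,...,1).\<close>
definition chi_theta :: "nat \<Rightarrow> nat \<Rightarrow> (nat \<Rightarrow> complex mat) \<times> (nat \<Rightarrow> complex mat) \<Rightarrow> complex" where
  "chi_theta p q gh = (\<Prod>j<q. det (snd gh j)) / (\<Prod>i<p. det (fst gh i))"

definition SI :: "nat \<Rightarrow> nat \<Rightarrow> (nat \<Rightarrow> nat) \<Rightarrow> (nat \<Rightarrow> nat) \<Rightarrow> nat \<Rightarrow> (qrep \<Rightarrow> complex) set" where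
  "SI p q a b k = {f. polyfun p q a b f \<and>
     (\<forall>gh \<in> GL p q a b. \<forall>V \<in> Rep p q a b. f (act gh V) = chi_theta p q gh ^ k * f V)}"

definition expvecs :: "nat \<Rightarrow> nat \<Rightarrow> (nat \<Rightarrow> nat) set" where
  "expvecs n k = {e. (\<forall>i>n. e i = 0) \<and> (\<Sum>i\<le>n. e i) = k}"

definition monom :: "nat \<Rightarrow> (nat \<Rightarrow> qrep \<Rightarrow> complex) \<Rightarrow> (nat \<Rightarrow> nat) \<Rightarrow> qrep \<Rightarrow> complex" where
  "monom n F e V = (\<Prod>i\<le>n. F i V ^ e i)"

end

theory Submission imports Defs begin

lemma polyfun_sum:
  "finite S \<Longrightarrow> (\<And>x. x \<in> S \<Longrightarrow> polyfun p q a b (f x)) \<Longrightarrow> polyfun p q a b (\<lambda>V. \<Sum>x\<in>S. f x V)"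
proof (induction S rule: finite_induct)
  case empty then show ?case using pf_const[of p q a b 0] by simp
next
  case (insert x F) then show ?case by (simp add: pf_add)
qed

lemma polyfun_prod:
  "finite S \<Longrightarrow> (\<And>x. x \<in> S \<Longrightarrow> polyfun p q a b (f x)) \<Longrightarrow> polyfun p q a b (\<lambda>V. \<Prod>x\<in>S. f x V)"
proof (induction S rule: finite_induct)
  case empty then show ?case using pf_const[of p q a b 1] by simp
next
  case (insert x F) then show ?case by (simp add: pf_mult)
qed

lemma polyfun_det:
  assumes "\<And>V. M V \<in> carrier_mat n n"
    and "\<And>r s. r < n \<Longrightarrow> s < n \<Longrightarrow> polyfun p q a b (\<lambda>V. M V $$ (r,s))"
  shows "polyfun p q a b (\<lambda>V. det (M V))"
proof -
  have eq: "(\<lambda>V. det (M V)) = (\<lambda>V. \<Sum>P\<in>{P. P permutes {0..<n}}. (\<lambda>V. of_int (signof P)) V * (\<lambda>V. \<Prod>i\<in>{0..<n}. M V $$ (i, P i)) V)"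
    using det_def'[OF assms(1)] by (auto simp: sign_def)
  show ?thesis unfolding eq
  proof (rule polyfun_sum)
    show "finite {P. P permutes {0..<n}}" by (simp add: finite_permutations)
  next
    fix P assume "P \<in> {P. P permutes {0..<n}}"
    then have P: "P permutes {0..<n}" by simp
    show "polyfun p q a b (\<lambda>V. of_int (signof P) * (\<Prod>i\<in>{0..<n}. M V $$ (i, P i)))"
    proof (rule pf_mult[OF pf_const], rule polyfun_prod)
      fix i assume "i \<in> {0..<n}"
      then show "polyfun p q a b (\<lambda>V. M V $$ (i, P i))"
        using assms(2) permutes_in_image[OF P] by auto
    qed simp
  qed
qed

lemma polyfun_cong:
  "polyfun p q a b f \<Longrightarrow> (\<And>i j r s. i < p \<Longrightarrow> j < q \<Longrightarrow> r < b j \<Longrightarrow> s < a i \<Longrightarrow> V i j $$ (r,s) = W i j $$ (r,s)) \<Longrightarrow> f V = f W"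
  by (induction rule: polyfun.induct) auto

definition lmix :: "qrep \<Rightarrow> qrep \<Rightarrow> complex \<Rightarrow> qrep" where
  "lmix W V t = (\<lambda>i j. mat (dim_row (V i j)) (dim_col (V i j))
      (\<lambda>(r,s). W i j $$ (r,s) + t * (V i j $$ (r,s) - W i j $$ (r,s))))"

lemma lmix_Rep: "V \<in> Rep p q a b \<Longrightarrow> lmix W V t \<in> Rep p q a b"
  unfolding Rep_def lmix_def carrier_mat_def by simp

lemma polyfun_line:
  "polyfun p q a b f \<Longrightarrow> V \<in> Rep p q a b \<Longrightarrow> \<exists>P. \<forall>t. f (lmix W V t) = poly P t"
proof (induction rule: polyfun.induct)
  case (pf_const c) then show ?case by (intro exI[of _ "[:c:]"]) simp
next
  case (pf_coord i j r s)
  then have "V i j \<in> carrier_mat (b j) (a i)" unfolding Rep_def by auto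
  then show ?case using pf_coord
    by (intro exI[of _ "[:W i j $$ (r,s), V i j $$ (r,s) - W i j $$ (r,s):]"]) (auto simp: lmix_def)
next
  case (pf_add f g)
  then obtain P Q where "\<forall>t. f (lmix W V t) = poly P t" "\<forall>t. g (lmix W V t) = poly Q t" by blast
  then show ?case by (intro exI[of _ "P + Q"]) simp
next
  case (pf_mult f g)
  then obtain P Q where "\<forall>t. f (lmix W V t) = poly P t" "\<forall>t. g (lmix W V t) = poly Q t" by blast
  then show ?case by (intro exI[of _ "P * Q"]) simp
qed

lemma lmix_0: "V \<in> Rep p q a b \<Longrightarrow> W \<in> Rep p q a b \<Longrightarrow> polyfun p q a b f \<Longrightarrow> f (lmix W V 0) = f W"
proof (rule polyfun_cong, assumption)
  fix i j r s assume *: "V \<in> Rep p q a b" "i < p" "j < q" "r < b j" "s < a i"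
  then have "dim_row (V i j) = b j" "dim_col (V i j) = a i" unfolding Rep_def carrier_mat_def by auto
  then show "lmix W V 0 i j $$ (r, s) = W i j $$ (r, s)" using * by (simp add: lmix_def)
qed

lemma lmix_1: "V \<in> Rep p q a b \<Longrightarrow> polyfun p q a b f \<Longrightarrow> f (lmix W V 1) = f V"
proof (rule polyfun_cong, assumption)
  fix i j r s assume *: "V \<in> Rep p q a b" "i < p" "j < q" "r < b j" "s < a i"
  then have "dim_row (V i j) = b j" "dim_col (V i j) = a i" unfolding Rep_def carrier_mat_def by auto
  then show "lmix W V 1 i j $$ (r, s) = V i j $$ (r, s)" using * by (simp add: lmix_def)
qed

lemma poly_inf_zero: "infinite S \<Longrightarrow> (\<And>x. x \<in> S \<Longrightarrow> poly p x = 0) \<Longrightarrow> p = (0::complex poly)"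
proof (rule ccontr)
  assume "infinite S" "\<And>x. x \<in> S \<Longrightarrow> poly p x = 0" "p \<noteq> 0"
  then have "finite {x. poly p x = 0}" "S \<subseteq> {x. poly p x = 0}" using poly_roots_finite by auto
  then show False using \<open>infinite S\<close> finite_subset by blast
qed

lemma dense_eq:
  assumes f1: "polyfun p q a b f1" and f2: "polyfun p q a b f2" and h: "polyfun p q a b h"
    and W: "W \<in> Rep p q a b" "h W \<noteq> 0"
    and eq: "\<And>V. V \<in> Rep p q a b \<Longrightarrow> h V \<noteq> 0 \<Longrightarrow> f1 V = f2 V"
    and V: "V \<in> Rep p q a b"
  shows "f1 V = f2 V"
proof -
  have fd: "polyfun p q a b (\<lambda>V. f1 V + (-1) * f2 V)"
    by (intro pf_add f1 pf_mult pf_const f2)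
  obtain P where P: "\<forall>t. f1 (lmix W V t) + (-1) * f2 (lmix W V t) = poly P t"
    using polyfun_line[OF fd V] by blast
  obtain H where H: "\<forall>t. h (lmix W V t) = poly H t"
    using polyfun_line[OF h V] by blast
  have "poly H 0 \<noteq> 0" using H lmix_0[OF V W(1) h] W(2) by simp
  then have "H \<noteq> 0" by auto
  then have fin: "finite {t. poly H t = 0}" by (rule poly_roots_finite)
  have "infinite (UNIV - {t. poly H t = 0})"
    using fin by (simp add: Diff_infinite_finite infinite_UNIV_char_0)
  moreover have "poly P t = 0" if "t \<in> UNIV - {t. poly H t = 0}" for t
  proof -
    have "h (lmix W V t) \<noteq> 0" using that H by auto
    then have "f1 (lmix W V t) = f2 (lmix W V t)" using eq lmix_Rep[OF V] by blast
    then show ?thesis using P[rule_format, of t] by simp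
  qed
  ultimately have "P = 0" by (rule poly_inf_zero)
  then have "f1 (lmix W V 1) = f2 (lmix W V 1)" using P
    by (metis poly_0 add_eq_0_iff mult_minus1 minus_minus)
  then show ?thesis using lmix_1[OF V f1] lmix_1[OF V f2] by simp
qed


lemma common_nonzero:
  "(\<And>j. j < (n::nat) \<Longrightarrow> polyfun p q a b (h j)) \<Longrightarrow>
   (\<And>j. j < n \<Longrightarrow> \<exists>V\<in>Rep p q a b. h j V \<noteq> 0) \<Longrightarrow>
   V0 \<in> Rep p q a b \<Longrightarrow> \<exists>V\<in>Rep p q a b. \<forall>j<n. h j V \<noteq> 0"
proof (induction n)
  case 0 then show ?case by auto
next
  case (Suc n)
  have "\<exists>V\<in>Rep p q a b. \<forall>j<n. h j V \<noteq> 0" using Suc by simp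
  then obtain U where U: "U \<in> Rep p q a b" "\<forall>j<n. h j U \<noteq> 0" by blast
  obtain V' where V': "V' \<in> Rep p q a b" "h n V' \<noteq> 0" using Suc.prems(2)[of n] by auto
  have "\<forall>j. \<exists>P. j < Suc n \<longrightarrow> (\<forall>t. h j (lmix U V' t) = poly P t)"
    using polyfun_line[OF Suc.prems(1) V'(1)] by blast
  then obtain P where P: "\<forall>j. j < Suc n \<longrightarrow> (\<forall>t. h j (lmix U V' t) = poly (P j) t)"
    by metis
  have nz: "P j \<noteq> 0" if "j < Suc n" for j
  proof (cases "j < n")
    case True
    have "poly (P j) 0 = h j U" using P that lmix_0[OF V'(1) U(1) Suc.prems(1)[OF that]] by auto
    then show ?thesis using U True by auto
  next
    case False then have "j = n" using that by auto
    have "poly (P j) 1 = h j V'" using P that lmix_1[OF V'(1) Suc.prems(1)[OF that], of U] by auto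
    then show ?thesis using V' \<open>j = n\<close> by auto
  qed
  have "(\<Prod>j<Suc n. P j) \<noteq> 0" using nz by (simp add: prod_zero_iff)
  then obtain t where t: "poly (\<Prod>j<Suc n. P j) t \<noteq> 0" using poly_all_0_iff_0 by blast
  then have "\<forall>j<Suc n. h j (lmix U V' t) \<noteq> 0" using P by (auto simp: poly_prod prod_zero_iff less_Suc_eq)
  then show ?case using lmix_Rep[OF V'(1)] by blast
qed

lemma minv_props:
  assumes A: "A \<in> carrier_mat n n" and d: "det A \<noteq> 0"
  shows "A * minv A = 1\<^sub>m n" "minv A * A = 1\<^sub>m n" "minv A \<in> carrier_mat n n"
proof -
  have "A \<in> Units (ring_mat TYPE(complex) n n)" by (rule det_non_zero_imp_unit[OF A d])
  then obtain B where B: "mat_inverse A = Some B" using mat_inverse(1)[OF A] by (metis option.exhaust)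
  then show "A * minv A = 1\<^sub>m n" "minv A * A = 1\<^sub>m n" "minv A \<in> carrier_mat n n"
    using mat_inverse(2)[OF A B] by (auto simp: minv_def)
qed

lemma minv_unique:
  assumes A: "A \<in> carrier_mat n n" and d: "det A \<noteq> 0" and B: "B \<in> carrier_mat n n" and BA: "B * A = 1\<^sub>m n"
  shows "minv A = B"
proof -
  note mp = minv_props[OF A d]
  have "minv A = (B * A) * minv A" using BA mp(3) by simp
  also have "\<dots> = B * (A * minv A)" using assoc_mult_mat[OF B A mp(3)] .
  also have "\<dots> = B" using mp(1) B by simp
  finally show ?thesis .
qed

lemma det_zero_col:
  assumes X: "X \<in> carrier_mat n n" and s: "s < n" and z: "\<And>r. r < n \<Longrightarrow> X $$ (r,s) = 0"
  shows "det X = (0::complex)"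
proof -
  have "(\<Prod>i = 0..<n. X $$ (i, P i)) = 0" if P: "P permutes {0..<n}" for P
  proof -
    have "inv_into UNIV P s \<in> {0..<n}" using permutes_in_image[OF permutes_inv[OF P]] s by simp
    moreover have "P (inv_into UNIV P s) = s" using permutes_inverses(1)[OF P] by simp
    ultimately have "\<exists>i\<in>{0..<n}. X $$ (i, P i) = 0" using z by force
    then show ?thesis by (rule prod_zero[rotated]) simp
  qed
  then show ?thesis unfolding det_def'[OF X] by (intro sum.neutral) auto
qed

lemma det_rowscale:
  assumes X: "X \<in> carrier_mat n n"
  shows "det (mat n n (\<lambda>(r,s). c r * X $$ (r,s))) = (\<Prod>r<n. c r) * (det X :: complex)"
proof -
  define D where "D = mat n n (\<lambda>(r,s). if r = s then c r else 0)"
  have D: "D \<in> carrier_mat n n" unfolding D_def by simp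
  have eq: "mat n n (\<lambda>(r,s). c r * X $$ (r,s)) = D * X"
  proof (rule eq_matI)
    fix i j assume ij: "i < dim_row (D * X)" "j < dim_col (D * X)"
    then have "i < n" "j < n" using D X by auto
    have "(\<Sum>ia = 0..<n. (if i = ia then c i else 0) * X $$ (ia, j)) = (\<Sum>ia = 0..<n. if i = ia then c i * X $$ (ia, j) else 0)"
      by (rule sum.cong) auto
    also have "\<dots> = c i * X $$ (i, j)" using \<open>i < n\<close> by (simp add: sum.delta)
    finally show "mat n n (\<lambda>(r,s). c r * X $$ (r,s)) $$ (i, j) = (D * X) $$ (i, j)"
      using X \<open>i < n\<close> \<open>j < n\<close> unfolding D_def by (simp add: scalar_prod_def)
  qed (use D X in auto)
  have "upper_triangular D" unfolding D_def upper_triangular_def by auto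
  then have "det D = (\<Prod>r<n. c r)"
    using det_upper_triangular[OF _ D] by (simp add: prod_list_diag_prod D_def atLeast0LessThan)
  then show ?thesis unfolding eq det_mult[OF D X] by simp
qed


section \<open>The specific quiver\<close>

definition aa :: "nat \<Rightarrow> nat \<Rightarrow> nat" where "aa m = (\<lambda>i. if i = 0 then m else 1)"
definition bb :: "nat \<Rightarrow> nat" where "bb = (\<lambda>j. 1)"
definition sk :: "nat \<Rightarrow> nat \<Rightarrow> nat" where "sk j r = (if r < j then r else Suc r)"
definition Mn :: "nat \<Rightarrow> nat \<Rightarrow> qrep \<Rightarrow> complex mat" where
  "Mn m j V = mat m m (\<lambda>(r,s). V 0 (sk j r) $$ (0,s))"
definition FF :: "nat \<Rightarrow> nat \<Rightarrow> qrep \<Rightarrow> complex" where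
  "FF m j V = V 1 j $$ (0,0) * det (Mn m j V)"

lemma aa_simps[simp]: "aa m 0 = m" "aa m (Suc 0) = 1" "bb j = 1"
  by (auto simp: aa_def bb_def)

lemma sk_lt: "j \<le> m \<Longrightarrow> r < m \<Longrightarrow> sk j r < m + 1"
  by (auto simp: sk_def)

lemma RepM_D: "V \<in> Rep 2 (m+1) (aa m) bb \<Longrightarrow> j < m + 1 \<Longrightarrow>
   V 0 j \<in> carrier_mat 1 m \<and> V 1 j \<in> carrier_mat 1 1"
proof -
  assume "V \<in> Rep 2 (m+1) (aa m) bb" "j < m + 1"
  then have "\<forall>i<2. V i j \<in> carrier_mat (bb j) (aa m i)" unfolding Rep_def by auto
  note A = this[rule_format]
  have "V 0 j \<in> carrier_mat (bb j) (aa m 0)" by (rule A) simp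
  moreover have "V 1 j \<in> carrier_mat (bb j) (aa m 1)" by (rule A) simp
  ultimately show ?thesis by simp
qed

lemma polyfun_FF: "j \<le> m \<Longrightarrow> polyfun 2 (m+1) (aa m) bb (FF m j)"
  unfolding FF_def
proof (rule pf_mult)
  assume j: "j \<le> m"
  show "polyfun 2 (m + 1) (aa m) bb (\<lambda>V. V 1 j $$ (0, 0))"
    using pf_coord[of 1 2 j "m+1" 0 bb 0 "aa m"] j by simp
  show "polyfun 2 (m + 1) (aa m) bb (\<lambda>V. det (Mn m j V))"
  proof (rule polyfun_det)
    show "Mn m j V \<in> carrier_mat m m" for V unfolding Mn_def by simp
    fix r s assume rs: "r < m" "s < m"
    have "polyfun 2 (m + 1) (aa m) bb (\<lambda>V. V 0 (sk j r) $$ (0, s))"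
      using pf_coord[of 0 2 "sk j r" "m+1" 0 bb s "aa m"] sk_lt[OF j rs(1)] rs by simp
    then show "polyfun 2 (m + 1) (aa m) bb (\<lambda>V. Mn m j V $$ (r, s))"
      unfolding Mn_def using rs by simp
  qed
qed

lemma GL_D:
  assumes "(g, h) \<in> GL 2 (m+1) (aa m) bb"
  shows "g 0 \<in> carrier_mat m m" "det (g 0) \<noteq> 0" "g 1 \<in> carrier_mat 1 1" "det (g 1) \<noteq> 0"
    "\<And>j. j < m + 1 \<Longrightarrow> h j \<in> carrier_mat 1 1 \<and> det (h j) \<noteq> 0"
proof -
  have A: "\<forall>i<2. g i \<in> carrier_mat (aa m i) (aa m i) \<and> det (g i) \<noteq> 0"
    and B: "\<forall>j<m+1. h j \<in> carrier_mat (bb j) (bb j) \<and> det (h j) \<noteq> 0"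
    using assms unfolding GL_def by auto
  show "g 0 \<in> carrier_mat m m" "det (g 0) \<noteq> 0" using A[rule_format, of 0] by auto
  show "g 1 \<in> carrier_mat 1 1" "det (g 1) \<noteq> 0" using A[rule_format, of 1] by auto
  show "\<And>j. j < m + 1 \<Longrightarrow> h j \<in> carrier_mat 1 1 \<and> det (h j) \<noteq> 0" using B by auto
qed

lemma mult3_entry:
  assumes h: "h \<in> carrier_mat 1 1" and X: "X \<in> carrier_mat 1 n" and G: "G \<in> carrier_mat n k" and s: "s < k"
  shows "(h * X * G) $$ (0,s) = h $$ (0,0) * (\<Sum>t=0..<n. X $$ (0,t) * G $$ (t,s))"
proof -
  have d: "dim_row h = 1" "dim_col h = 1" "dim_row X = 1" "dim_col X = n" "dim_row G = n" "dim_col G = k"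
    using h X G by auto
  have 1: "(h * X) $$ (0,t) = h $$ (0,0) * X $$ (0,t)" if "t < n" for t
    using d that by (simp add: scalar_prod_def)
  have "(h * X * G) $$ (0,s) = (\<Sum>t=0..<n. (h * X) $$ (0,t) * G $$ (t,s))"
    using d s by (simp add: scalar_prod_def)
  also have "\<dots> = (\<Sum>t=0..<n. h $$ (0,0) * (X $$ (0,t) * G $$ (t,s)))"
    by (rule sum.cong) (auto simp: 1 mult.assoc)
  finally show ?thesis by (simp add: sum_distrib_left)
qed

lemma act_entries:
  assumes gh: "(g, h) \<in> GL 2 (m+1) (aa m) bb" and V: "V \<in> Rep 2 (m+1) (aa m) bb" and j: "j < m+1"
  shows "s < m \<Longrightarrow> act (g, h) V 0 j $$ (0,s) = h j $$ (0,0) * (\<Sum>t=0..<m. V 0 j $$ (0,t) * minv (g 0) $$ (t,s))"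
    and "act (g, h) V 1 j $$ (0,0) = h j $$ (0,0) * V 1 j $$ (0,0) / det (g 1)"
proof -
  note G = GL_D[OF gh]
  note mp0 = minv_props[OF G(1) G(2)]
  note mp1 = minv_props[OF G(3) G(4)]
  note VV = RepM_D[OF V j]
  have hj: "h j \<in> carrier_mat 1 1" using G(5)[OF j] by auto
  show "s < m \<Longrightarrow> act (g, h) V 0 j $$ (0,s) = h j $$ (0,0) * (\<Sum>t=0..<m. V 0 j $$ (0,t) * minv (g 0) $$ (t,s))"
    using mult3_entry[OF hj conjunct1[OF VV] mp0(3)] unfolding act_def by simp
  have "(minv (g 1) * g 1) $$ (0,0) = 1" using mp1(2) by simp
  then have "minv (g 1) $$ (0,0) * g 1 $$ (0,0) = 1" using mp1(3) G(3) by (simp add: scalar_prod_def)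
  moreover have "det (g 1) = g 1 $$ (0,0)" using det_single[OF G(3)] .
  ultimately have inv1: "minv (g 1) $$ (0,0) = 1 / det (g 1)" using G(4) by (simp add: field_simps)
  have d: "dim_row (h j) = 1" "dim_col (h j) = 1" "dim_row (V 1 j) = 1" "dim_col (V 1 j) = 1"
    "dim_row (minv (g 1)) = 1" "dim_col (minv (g 1)) = 1"
    using VV hj mp1(3) by auto
  have "act (g, h) V 1 j $$ (0,0) = h j $$ (0,0) * (V 1 j $$ (0,0) * minv (g 1) $$ (0,0))"
    using mult3_entry[OF hj conjunct2[OF VV] mp1(3), of 0] unfolding act_def by simp
  then show "act (g, h) V 1 j $$ (0,0) = h j $$ (0,0) * V 1 j $$ (0,0) / det (g 1)"
    using inv1 by simp
qed

lemma chi_eq: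
  assumes gh: "(g, h) \<in> GL 2 (m+1) (aa m) bb"
  shows "chi_theta 2 (m+1) (g, h) = (\<Prod>j<m+1. h j $$ (0,0)) / (det (g 0) * det (g 1))"
proof -
  note G = GL_D[OF gh]
  have "(\<Prod>j<m+1. det (h j)) = (\<Prod>j<m+1. h j $$ (0,0))"
    by (rule prod.cong) (use G(5) det_single in auto)
  moreover have "(\<Prod>i<2. det (g i)) = det (g 0) * det (g 1)"
    by (simp add: numeral_2_eq_2)
  ultimately show ?thesis unfolding chi_theta_def by simp
qed

lemma sk_image: assumes "j \<le> m" shows "sk j ` {..<m} = {..<m+1} - {j}"
proof (intro equalityI subsetI)
  fix x assume "x \<in> sk j ` {..<m}" then show "x \<in> {..<m+1} - {j}"
    by (auto simp: sk_def split: if_splits)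
next
  fix x assume "x \<in> {..<m+1} - {j}"
  note * = assms this
  show "x \<in> sk j ` {..<m}"
  proof (cases "x < j")
    case True then show ?thesis using * by (intro image_eqI[of _ _ x]) (auto simp: sk_def)
  next
    case False then show ?thesis using * by (intro image_eqI[of _ _ "x - 1"]) (auto simp: sk_def)
  qed
qed

lemma sk_inj: "inj_on (sk j) A"
  by (auto simp: inj_on_def sk_def split: if_splits)

lemma prod_sk: "j \<le> m \<Longrightarrow> (f j :: complex) * (\<Prod>r<m. f (sk j r)) = (\<Prod>r<m+1. f r)"
proof -
  assume j: "j \<le> m"
  have "(\<Prod>r<m. f (sk j r)) = (\<Prod>r\<in>sk j ` {..<m}. f r)"
    using prod.reindex[OF sk_inj[of j "{..<m}"], of f] by simp
  also have "\<dots> = (\<Prod>r\<in>{..<m+1} - {j}. f r)" using sk_image[OF j] by simp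
  finally show ?thesis using prod.remove[of "{..<m+1}" j f] j by simp
qed

lemma FF_semi:
  assumes gh: "(g, h) \<in> GL 2 (m+1) (aa m) bb" and V: "V \<in> Rep 2 (m+1) (aa m) bb" and j: "j \<le> m"
  shows "FF m j (act (g, h) V) = chi_theta 2 (m+1) (g, h) * FF m j V"
proof -
  note G = GL_D[OF gh]
  note mp0 = minv_props[OF G(1) G(2)]
  define \<eta> where "\<eta> = (\<lambda>j. h j $$ (0,0))"
  have Mc: "Mn m j V \<in> carrier_mat m m" unfolding Mn_def by simp
  have "Mn m j (act (g, h) V) = mat m m (\<lambda>(r,s). \<eta> (sk j r) * (Mn m j V * minv (g 0)) $$ (r,s))"
  proof (rule eq_matI)
    fix r s assume rs: "r < dim_row (mat m m (\<lambda>(r,s). \<eta> (sk j r) * (Mn m j V * minv (g 0)) $$ (r,s)))"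
      "s < dim_col (mat m m (\<lambda>(r,s). \<eta> (sk j r) * (Mn m j V * minv (g 0)) $$ (r,s)))"
    then have rs: "r < m" "s < m" by auto
    show "Mn m j (act (g, h) V) $$ (r, s) = mat m m (\<lambda>(r,s). \<eta> (sk j r) * (Mn m j V * minv (g 0)) $$ (r,s)) $$ (r, s)"
      using rs act_entries(1)[OF gh V sk_lt[OF j rs(1)] rs(2)] mp0(3)
      unfolding Mn_def \<eta>_def by (simp add: scalar_prod_def)
  qed (auto simp: Mn_def)
  then have "det (Mn m j (act (g, h) V)) = (\<Prod>r<m. \<eta> (sk j r)) * det (Mn m j V * minv (g 0))"
    using det_rowscale[of "Mn m j V * minv (g 0)" m] Mc mp0(3) by simp
  also have "det (Mn m j V * minv (g 0)) = det (Mn m j V) * det (minv (g 0))"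
    by (rule det_mult[OF Mc mp0(3)])
  also have "det (minv (g 0)) = 1 / det (g 0)"
  proof -
    have "det (minv (g 0)) * det (g 0) = 1" using det_mult[OF mp0(3) G(1)] mp0(2) by simp
    then show ?thesis using G(2) by (simp add: field_simps)
  qed
  finally have dM: "det (Mn m j (act (g, h) V)) = (\<Prod>r<m. \<eta> (sk j r)) * (det (Mn m j V) / det (g 0))" by simp
  have x: "act (g, h) V 1 j $$ (0,0) = \<eta> j * V 1 j $$ (0,0) / det (g 1)"
    using act_entries(2)[OF gh V] j unfolding \<eta>_def by simp
  have "FF m j (act (g, h) V) = (\<eta> j * (\<Prod>r<m. \<eta> (sk j r))) / (det (g 0) * det (g 1)) * FF m j V"
    unfolding FF_def dM x by (simp add: field_simps)
  also have "\<eta> j * (\<Prod>r<m. \<eta> (sk j r)) = (\<Prod>r<m+1. \<eta> r)" by (rule prod_sk[OF j])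
  finally show ?thesis using chi_eq[OF gh] unfolding \<eta>_def by simp
qed

lemma FF_SI: "j \<le> m \<Longrightarrow> FF m j \<in> SI 2 (m+1) (aa m) bb 1"
proof -
  assume j: "j \<le> m"
  have "FF m j (act gh V) = chi_theta 2 (m+1) gh ^ 1 * FF m j V"
    if "gh \<in> GL 2 (m+1) (aa m) bb" "V \<in> Rep 2 (m+1) (aa m) bb" for gh V
    using FF_semi[of "fst gh" "snd gh" m V j] that j by simp
  then show ?thesis unfolding SI_def using polyfun_FF[OF j] by blast
qed


section \<open>Normal forms\<close>

definition Nu :: "nat \<Rightarrow> (nat \<Rightarrow> complex) \<Rightarrow> (nat \<Rightarrow> complex) \<Rightarrow> qrep" where
  "Nu m u x = (\<lambda>i j. if i = 0 then mat 1 m (\<lambda>(_,s). if j = 0 then u s else if s = j - 1 then 1 else 0)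
                     else mat 1 1 (\<lambda>_. x j))"

lemma Nu_Rep: "Nu m u x \<in> Rep 2 (m+1) (aa m) bb"
  unfolding Rep_def Nu_def by (auto simp: aa_def bb_def)

lemma GL_I:
  assumes "g 0 \<in> carrier_mat m m" "det (g 0) \<noteq> 0" "g 1 \<in> carrier_mat 1 1" "det (g 1) \<noteq> 0"
    "\<And>j. j < m + 1 \<Longrightarrow> h j \<in> carrier_mat 1 1 \<and> det (h j) \<noteq> 0"
  shows "(g, h) \<in> GL 2 (m+1) (aa m) bb"
proof -
  have "\<forall>i<2. g i \<in> carrier_mat (aa m i) (aa m i) \<and> det (g i) \<noteq> 0"
  proof (intro allI impI)
    fix i :: nat assume "i < 2"
    then have "i = 0 \<or> i = 1" by auto
    then show "g i \<in> carrier_mat (aa m i) (aa m i) \<and> det (g i) \<noteq> 0" using assms by auto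
  qed
  then show ?thesis unfolding GL_def using assms(5) by auto
qed

lemma SI_D: "f \<in> SI p q a b k \<Longrightarrow> gh \<in> GL p q a b \<Longrightarrow> V \<in> Rep p q a b \<Longrightarrow>
  f (act gh V) = chi_theta p q gh ^ k * f V"
  "f \<in> SI p q a b k \<Longrightarrow> polyfun p q a b f"
  unfolding SI_def by auto

lemma ij_cases: "(i::nat) < 2 \<Longrightarrow> i = 0 \<or> i = 1" by auto

lemma step1:
  assumes V: "V \<in> Rep 2 (m+1) (aa m) bb" and dB: "det (Mn m 0 V) \<noteq> 0"
    and f: "f \<in> SI 2 (m+1) (aa m) bb k"
  shows "f V = det (Mn m 0 V) ^ k * f (Nu m (\<lambda>s. \<Sum>t=0..<m. V 0 0 $$ (0,t) * minv (Mn m 0 V) $$ (t,s)) (\<lambda>j. V 1 j $$ (0,0)))"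
proof -
  define B where "B = Mn m 0 V"
  define u where "u = (\<lambda>s. \<Sum>t=0..<m. V 0 0 $$ (0,t) * minv B $$ (t,s))"
  define g where "g = (\<lambda>i::nat. if i = 0 then B else 1\<^sub>m 1)"
  define h where "h = (\<lambda>j::nat. (1\<^sub>m 1 :: complex mat))"
  have Bc: "B \<in> carrier_mat m m" unfolding B_def Mn_def by simp
  have dB': "det B \<noteq> 0" using dB unfolding B_def .
  note mp = minv_props[OF Bc dB']
  have gh: "(g, h) \<in> GL 2 (m+1) (aa m) bb"
    by (rule GL_I) (use Bc dB' in \<open>auto simp: g_def h_def\<close>)
  have chi: "chi_theta 2 (m+1) (g, h) = 1 / det B"
    using chi_eq[OF gh] by (simp add: g_def h_def)
  have "f (act (g, h) V) = f (Nu m u (\<lambda>j. V 1 j $$ (0,0)))"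
  proof (rule polyfun_cong[OF SI_D(2)[OF f]])
    fix i j r s assume ij: "i < 2" "j < m + 1" "r < bb j" "s < aa m i"
    then have r: "r = 0" by simp
    from ij_cases[OF ij(1)] show "act (g, h) V i j $$ (r, s) = Nu m u (\<lambda>j. V 1 j $$ (0, 0)) i j $$ (r, s)"
    proof
      assume i: "i = 0"
      then have s: "s < m" using ij by simp
      have e: "act (g, h) V 0 j $$ (0,s) = (\<Sum>t=0..<m. V 0 j $$ (0,t) * minv B $$ (t,s))"
        using act_entries(1)[OF gh V ij(2) s] by (simp add: g_def h_def)
      show ?thesis
      proof (cases "j = 0")
        case True then show ?thesis using e i r s by (simp add: Nu_def u_def)
      next
        case False
        then have j1: "j - 1 < m" using ij by simp
        have "(B * minv B) $$ (j - 1, s) = (\<Sum>t=0..<m. V 0 j $$ (0,t) * minv B $$ (t,s))"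
          using Bc mp(3) j1 s False by (simp add: scalar_prod_def B_def Mn_def sk_def)
        then have "(\<Sum>t=0..<m. V 0 j $$ (0,t) * minv B $$ (t,s)) = (if j - 1 = s then 1 else 0)"
          using mp(1) j1 s by simp
        then show ?thesis using e i r s False by (simp add: Nu_def)
      qed
    next
      assume i: "i = 1"
      then have s: "s = 0" using ij by simp
      show ?thesis using act_entries(2)[OF gh V ij(2)] i r s by (simp add: g_def h_def Nu_def)
    qed
  qed
  then have "f (Nu m u (\<lambda>j. V 1 j $$ (0,0))) = (1 / det B) ^ k * f V"
    using SI_D(1)[OF f gh V] chi by simp
  then show ?thesis using dB' unfolding B_def[symmetric] u_def[symmetric]
    by (simp add: field_simps power_divide)
qed


lemma det_diag:
  "det (mat n n (\<lambda>(r,s). if r = s then c r else 0)) = (\<Prod>r<n. c r :: complex)"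
proof -
  have "mat n n (\<lambda>(r,s). if r = s then c r else 0) = mat n n (\<lambda>(r,s). c r * (1\<^sub>m n :: complex mat) $$ (r,s))"
    by (rule eq_matI) auto
  then show ?thesis using det_rowscale[of "1\<^sub>m n" n c] by simp
qed

lemma step2:
  assumes u: "\<forall>s<m. u s \<noteq> 0" and f: "f \<in> SI 2 (m+1) (aa m) bb k"
  shows "f (Nu m u x) = f (Nu m (\<lambda>_. 1) (\<lambda>j. if j = 0 then x 0 else u (j - 1) * x j))"
proof -
  define Dm where "Dm = mat m m (\<lambda>(r,s). if r = s then u r else 0)"
  define Di where "Di = mat m m (\<lambda>(r,s). if r = s then 1 / u r else 0)"
  define g where "g = (\<lambda>i::nat. if i = 0 then Dm else 1\<^sub>m 1)"
  define h where "h = (\<lambda>j::nat. if j = 0 then 1\<^sub>m 1 else mat 1 1 (\<lambda>_. u (j - 1)) :: complex mat)"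
  have Dc: "Dm \<in> carrier_mat m m" "Di \<in> carrier_mat m m" unfolding Dm_def Di_def by auto
  have dD: "det Dm = (\<Prod>r<m. u r)" unfolding Dm_def by (rule det_diag)
  then have dD0: "det Dm \<noteq> 0" using u by simp
  have "Di * Dm = 1\<^sub>m m"
  proof (rule eq_matI)
    fix r s assume rs: "r < dim_row (1\<^sub>m m :: complex mat)" "s < dim_col (1\<^sub>m m :: complex mat)"
    then have rs: "r < m" "s < m" by auto
    have "(Di * Dm) $$ (r,s) = (\<Sum>t=0..<m. (if r = t then 1 / u r else 0) * Dm $$ (t,s))"
      using rs Dc by (simp add: scalar_prod_def Di_def)
    also have "\<dots> = (\<Sum>t=0..<m. if r = t then 1 / u r * Dm $$ (t,s) else 0)"
      by (rule sum.cong) auto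
    also have "\<dots> = 1 / u r * Dm $$ (r,s)" using rs by (simp add: sum.delta)
    also have "\<dots> = (1\<^sub>m m :: complex mat) $$ (r,s)" using rs u by (simp add: Dm_def)
    finally show "(Di * Dm) $$ (r,s) = (1\<^sub>m m :: complex mat) $$ (r,s)" .
  qed (use Dc in auto)
  then have mDi: "minv Dm = Di" using minv_unique[OF Dc(1) dD0 Dc(2)] by simp
  have gh: "(g, h) \<in> GL 2 (m+1) (aa m) bb"
  proof (rule GL_I)
    show "g 0 \<in> carrier_mat m m" "det (g 0) \<noteq> 0" "g 1 \<in> carrier_mat 1 1" "det (g 1) \<noteq> 0"
      using Dc dD0 by (auto simp: g_def)
    fix j assume j: "j < m + 1"
    show "h j \<in> carrier_mat 1 1 \<and> det (h j) \<noteq> 0"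
    proof (cases "j = 0")
      case False
      then have "u (j - 1) \<noteq> 0" using u j by auto
      moreover have "det (mat 1 1 (\<lambda>_. u (j - 1))) = u (j - 1)" by (subst det_single) auto
      ultimately show ?thesis using False by (simp add: h_def)
    qed (simp add: h_def)
  qed
  have "(\<Prod>j<m+1. h j $$ (0,0)) = (\<Prod>j<m. u j)"
    by (simp only: Suc_eq_plus1[symmetric] prod.lessThan_Suc_shift) (simp add: h_def)
  then have chi: "chi_theta 2 (m+1) (g, h) = 1"
    using chi_eq[OF gh] dD dD0 by (simp add: g_def)
  have "f (act (g, h) (Nu m u x)) = f (Nu m (\<lambda>_. 1) (\<lambda>j. if j = 0 then x 0 else u (j - 1) * x j))"
  proof (rule polyfun_cong[OF SI_D(2)[OF f]])
    fix i j r s assume ij: "i < 2" "j < m + 1" "r < bb j" "s < aa m i"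
    then have r: "r = 0" by simp
    from ij_cases[OF ij(1)] show "act (g, h) (Nu m u x) i j $$ (r, s) = Nu m (\<lambda>_. 1) (\<lambda>j. if j = 0 then x 0 else u (j - 1) * x j) i j $$ (r, s)"
    proof
      assume i: "i = 0"
      then have s: "s < m" using ij by simp
      have e: "act (g, h) (Nu m u x) 0 j $$ (0,s) = h j $$ (0,0) * (\<Sum>t=0..<m. Nu m u x 0 j $$ (0,t) * Di $$ (t,s))"
        using act_entries(1)[OF gh Nu_Rep ij(2) s] mDi by (simp add: g_def)
      show ?thesis
      proof (cases "j = 0")
        case True
        have "(\<Sum>t=0..<m. Nu m u x 0 j $$ (0,t) * Di $$ (t,s)) = (\<Sum>t=0..<m. if t = s then u t * (1 / u t) else 0)"
          by (rule sum.cong) (use True s in \<open>auto simp: Nu_def Di_def\<close>)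
        also have "\<dots> = 1" using s u by (simp add: sum.delta)
        finally show ?thesis using e i r s True by (simp add: Nu_def h_def)
      next
        case False
        then have j1: "j - 1 < m" using ij by simp
        have "(\<Sum>t=0..<m. Nu m u x 0 j $$ (0,t) * Di $$ (t,s)) = (\<Sum>t=0..<m. if t = j - 1 then Di $$ (t,s) else 0)"
          by (rule sum.cong) (use False s in \<open>auto simp: Nu_def\<close>)
        also have "\<dots> = Di $$ (j - 1, s)" using j1 by (simp add: sum.delta)
        finally show ?thesis using e i r s False j1 u by (simp add: Nu_def h_def Di_def)
      qed
    next
      assume i: "i = 1"
      then have s: "s = 0" using ij by simp
      show ?thesis using act_entries(2)[OF gh Nu_Rep ij(2)] i r s
        by (simp add: g_def h_def Nu_def)
    qed
  qed
  then show ?thesis using SI_D(1)[OF f gh Nu_Rep] chi by simp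
qed

lemma step3:
  assumes l: "l \<noteq> 0" and f: "f \<in> SI 2 (m+1) (aa m) bb k"
  shows "f (Nu m (\<lambda>_. 1) (\<lambda>j. l * y j)) = l ^ k * f (Nu m (\<lambda>_. 1) y)"
proof -
  define g where "g = (\<lambda>i::nat. if i = 0 then 1\<^sub>m m else mat 1 1 (\<lambda>_. 1 / l) :: complex mat)"
  define h where "h = (\<lambda>j::nat. (1\<^sub>m 1 :: complex mat))"
  have d1: "det (mat 1 1 (\<lambda>_. 1 / l)) = 1 / l" by (subst det_single) auto
  then have d1': "det (mat (Suc 0) (Suc 0) (\<lambda>_. 1 / l)) = 1 / l" by simp
  have gh: "(g, h) \<in> GL 2 (m+1) (aa m) bb"
    by (rule GL_I) (use l d1 in \<open>auto simp: g_def h_def\<close>)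
  have mI: "minv (1\<^sub>m m) = (1\<^sub>m m :: complex mat)" by (rule minv_unique) auto
  have chi: "chi_theta 2 (m+1) (g, h) = l"
    using chi_eq[OF gh] d1 by (simp add: g_def h_def)
  have "f (act (g, h) (Nu m (\<lambda>_. 1) y)) = f (Nu m (\<lambda>_. 1) (\<lambda>j. l * y j))"
  proof (rule polyfun_cong[OF SI_D(2)[OF f]])
    fix i j r s assume ij: "i < 2" "j < m + 1" "r < bb j" "s < aa m i"
    then have r: "r = 0" by simp
    from ij_cases[OF ij(1)] show "act (g, h) (Nu m (\<lambda>_. 1) y) i j $$ (r, s) = Nu m (\<lambda>_. 1) (\<lambda>j. l * y j) i j $$ (r, s)"
    proof
      assume i: "i = 0"
      then have s: "s < m" using ij by simp
      have e: "act (g, h) (Nu m (\<lambda>_. 1) y) 0 j $$ (0,s) = (\<Sum>t=0..<m. Nu m (\<lambda>_. 1) y 0 j $$ (0,t) * (1\<^sub>m m :: complex mat) $$ (t,s))"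
        using act_entries(1)[OF gh Nu_Rep ij(2) s] mI by (simp add: g_def h_def)
      have "(\<Sum>t=0..<m. Nu m (\<lambda>_. 1) y 0 j $$ (0,t) * (1\<^sub>m m :: complex mat) $$ (t,s)) = (\<Sum>t=0..<m. if t = s then Nu m (\<lambda>_. 1) y 0 j $$ (0,t) else 0)"
        by (rule sum.cong) (use s in auto)
      also have "\<dots> = Nu m (\<lambda>_. 1) y 0 j $$ (0,s)" using s by (simp add: sum.delta)
      finally show ?thesis using e i r s by (simp add: Nu_def)
    next
      assume i: "i = 1"
      then have s: "s = 0" using ij by simp
      show ?thesis using act_entries(2)[OF gh Nu_Rep ij(2)] i r s l
        by (simp add: g_def h_def Nu_def d1')
    qed
  qed
  then show ?thesis using SI_D(1)[OF f gh Nu_Rep] chi by simp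
qed


definition dl :: "nat \<Rightarrow> nat \<Rightarrow> complex" where
  "dl m j = det (Mn m j (Nu m (\<lambda>_. 1) (\<lambda>_. 0)))"

lemma FF_N: "FF m j (Nu m (\<lambda>_. 1) y) = y j * dl m j"
  unfolding FF_def dl_def Mn_def Nu_def by simp

lemma chain:
  assumes V: "V \<in> Rep 2 (m+1) (aa m) bb" and nz: "\<forall>j\<le>m. FF m j V \<noteq> 0"
  shows "\<exists>\<beta> y. \<beta> \<noteq> 0 \<and> (\<forall>k f. f \<in> SI 2 (m+1) (aa m) bb k \<longrightarrow> f V = \<beta> ^ k * f (Nu m (\<lambda>_. 1) y))"
proof -
  define u where "u = (\<lambda>s. \<Sum>t=0..<m. V 0 0 $$ (0,t) * minv (Mn m 0 V) $$ (t,s))"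
  define x where "x = (\<lambda>j. V 1 j $$ (0,0))"
  have dB: "det (Mn m 0 V) \<noteq> 0" using nz unfolding FF_def by auto
  have u0: "\<forall>s<m. u s \<noteq> 0"
  proof (intro allI impI)
    fix s assume s: "s < m"
    have "FF m (Suc s) V = det (Mn m 0 V) ^ 1 * FF m (Suc s) (Nu m u x)"
      using step1[OF V dB FF_SI[of "Suc s" m]] s unfolding u_def x_def by simp
    then have nzd: "det (Mn m (Suc s) (Nu m u x)) \<noteq> 0" using nz s unfolding FF_def by auto
    show "u s \<noteq> 0"
    proof
      assume us: "u s = 0"
      have "det (Mn m (Suc s) (Nu m u x)) = 0"
        by (rule det_zero_col[of _ m s]) (use s us in \<open>auto simp: Mn_def Nu_def sk_def\<close>)
      then show False using nzd by simp
    qed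
  qed
  have "\<forall>k f. f \<in> SI 2 (m+1) (aa m) bb k \<longrightarrow>
     f V = det (Mn m 0 V) ^ k * f (Nu m (\<lambda>_. 1) (\<lambda>j. if j = 0 then x 0 else u (j - 1) * x j))"
  proof (intro allI impI)
    fix k f assume f: "f \<in> SI 2 (m+1) (aa m) bb k"
    have "f V = det (Mn m 0 V) ^ k * f (Nu m u x)" using step1[OF V dB f] unfolding u_def x_def by simp
    also have "f (Nu m u x) = f (Nu m (\<lambda>_. 1) (\<lambda>j. if j = 0 then x 0 else u (j - 1) * x j))"
      by (rule step2[OF u0 f])
    finally show "f V = det (Mn m 0 V) ^ k * f (Nu m (\<lambda>_. 1) (\<lambda>j. if j = 0 then x 0 else u (j - 1) * x j))" .
  qed
  then show ?thesis using dB by blast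
qed

definition Pt :: "nat \<Rightarrow> nat \<Rightarrow> qrep" where
  "Pt m j = (\<lambda>i j'. if i = 0 then mat 1 m (\<lambda>(_,s). if s = (if j' < j then j' else j' - 1) then 1 else 0)
                   else mat 1 1 (\<lambda>_. 1))"

lemma Pt_Rep: "Pt m j \<in> Rep 2 (m+1) (aa m) bb"
  unfolding Rep_def Pt_def by (auto simp: aa_def bb_def)

lemma FF_Pt: "FF m j (Pt m j) = 1"
proof -
  have "Mn m j (Pt m j) = 1\<^sub>m m"
    by (rule eq_matI) (auto simp: Mn_def Pt_def sk_def)
  then show ?thesis unfolding FF_def by (simp add: Pt_def)
qed

lemma G_nonempty: "\<exists>W\<in>Rep 2 (m+1) (aa m) bb. \<forall>j\<le>m. FF m j W \<noteq> 0"
proof -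
  have "\<exists>W\<in>Rep 2 (m+1) (aa m) bb. \<forall>j<m+1. FF m j W \<noteq> 0"
  proof (rule common_nonzero[OF _ _ Nu_Rep])
    fix j assume "j < m + 1"
    then show "polyfun 2 (m+1) (aa m) bb (FF m j)" by (intro polyfun_FF) simp
    show "\<exists>V\<in>Rep 2 (m+1) (aa m) bb. FF m j V \<noteq> 0" using Pt_Rep FF_Pt by (metis one_neq_zero)
  qed
  then obtain W where W: "W \<in> Rep 2 (m+1) (aa m) bb" "\<forall>j<m+1. FF m j W \<noteq> 0" by blast
  have "\<forall>j\<le>m. FF m j W \<noteq> 0"
  proof (intro allI impI)
    fix j assume "j \<le> m" then have "j < m + 1" by simp
    then show "FF m j W \<noteq> 0" using W(2) by blast
  qed
  then show ?thesis using W(1) by blast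
qed

lemma dl_nz: "j \<le> m \<Longrightarrow> dl m j \<noteq> 0"
proof -
  assume j: "j \<le> m"
  obtain W where W: "W \<in> Rep 2 (m+1) (aa m) bb" "\<forall>j\<le>m. FF m j W \<noteq> 0" using G_nonempty by blast
  obtain \<beta> y where BY: "\<beta> \<noteq> 0" "\<forall>k f. f \<in> SI 2 (m+1) (aa m) bb k \<longrightarrow> f W = \<beta> ^ k * f (Nu m (\<lambda>_. 1) y)"
    using chain[OF W] by blast
  have "FF m j W = \<beta> * (y j * dl m j)" using BY(2) FF_SI[OF j] FF_N by (metis power_one_right)
  then show ?thesis using W(2) j by auto
qed


section \<open>Polynomial representations on the slice\<close>

definition ymono :: "nat \<Rightarrow> (nat \<Rightarrow> nat) \<Rightarrow> (nat \<Rightarrow> complex) \<Rightarrow> complex" where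
  "ymono m e y = (\<Prod>i\<le>m. y i ^ e i)"

definition rep :: "nat \<Rightarrow> ((nat \<Rightarrow> complex) \<Rightarrow> complex) \<Rightarrow> bool" where
  "rep m \<phi> = (\<exists>E C. finite E \<and> (\<forall>e\<in>E. \<forall>i>m. e i = 0) \<and> (\<forall>y. \<phi> y = (\<Sum>e\<in>E. C e * ymono m e y)))"

lemma ymono_add: "ymono m (\<lambda>i. e1 i + e2 i) y = ymono m e1 y * ymono m e2 y"
  unfolding ymono_def by (simp add: power_add prod.distrib)

lemma sum_extend:
  assumes "finite A" "E \<subseteq> A"
  shows "(\<Sum>e\<in>A. (if e \<in> E then C e else 0) * g e) = (\<Sum>e\<in>E. C e * (g e :: complex))"
  by (rule sum.mono_neutral_cong_right) (use assms in auto)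

lemma rep_add:
  assumes "rep m \<phi>1" "rep m \<phi>2" shows "rep m (\<lambda>y. \<phi>1 y + \<phi>2 y)"
proof -
  obtain E1 C1 where 1: "finite E1" "\<forall>e\<in>E1. \<forall>i>m. e i = 0" "\<forall>y. \<phi>1 y = (\<Sum>e\<in>E1. C1 e * ymono m e y)"
    using assms(1) unfolding rep_def by blast
  obtain E2 C2 where 2: "finite E2" "\<forall>e\<in>E2. \<forall>i>m. e i = 0" "\<forall>y. \<phi>2 y = (\<Sum>e\<in>E2. C2 e * ymono m e y)"
    using assms(2) unfolding rep_def by blast
  define C where "C = (\<lambda>e. (if e \<in> E1 then C1 e else 0) + (if e \<in> E2 then C2 e else 0))"
  have "\<phi>1 y + \<phi>2 y = (\<Sum>e\<in>E1 \<union> E2. C e * ymono m e y)" for y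
  proof -
    have "(\<Sum>e\<in>E1 \<union> E2. C e * ymono m e y) =
      (\<Sum>e\<in>E1 \<union> E2. (if e \<in> E1 then C1 e else 0) * ymono m e y) + (\<Sum>e\<in>E1 \<union> E2. (if e \<in> E2 then C2 e else 0) * ymono m e y)"
      unfolding C_def by (simp add: distrib_right sum.distrib)
    also have "\<dots> = \<phi>1 y + \<phi>2 y"
      using sum_extend[of "E1 \<union> E2" E1 C1] sum_extend[of "E1 \<union> E2" E2 C2] 1 2 by simp
    finally show ?thesis by simp
  qed
  then show ?thesis unfolding rep_def using 1 2 by (intro exI[of _ "E1 \<union> E2"] exI[of _ C]) auto
qed

lemma rep_mult:
  assumes "rep m \<phi>1" "rep m \<phi>2" shows "rep m (\<lambda>y. \<phi>1 y * \<phi>2 y)"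
proof -
  obtain E1 C1 where 1: "finite E1" "\<forall>e\<in>E1. \<forall>i>m. e i = 0" "\<forall>y. \<phi>1 y = (\<Sum>e\<in>E1. C1 e * ymono m e y)"
    using assms(1) unfolding rep_def by blast
  obtain E2 C2 where 2: "finite E2" "\<forall>e\<in>E2. \<forall>i>m. e i = 0" "\<forall>y. \<phi>2 y = (\<Sum>e\<in>E2. C2 e * ymono m e y)"
    using assms(2) unfolding rep_def by blast
  define ad where "ad = (\<lambda>(e1::nat\<Rightarrow>nat, e2::nat\<Rightarrow>nat). (\<lambda>i. e1 i + e2 i))"
  define E where "E = ad ` (E1 \<times> E2)"
  define C where "C = (\<lambda>e. \<Sum>p\<in>{p \<in> E1 \<times> E2. ad p = e}. C1 (fst p) * C2 (snd p))"
  have fE: "finite E" unfolding E_def using 1 2 by simp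
  have sE: "\<forall>e\<in>E. \<forall>i>m. e i = 0" unfolding E_def ad_def using 1 2 by auto
  have "\<phi>1 y * \<phi>2 y = (\<Sum>e\<in>E. C e * ymono m e y)" for y
  proof -
    have "\<phi>1 y * \<phi>2 y = (\<Sum>p\<in>E1 \<times> E2. C1 (fst p) * C2 (snd p) * ymono m (ad p) y)"
      unfolding 1(3)[rule_format] 2(3)[rule_format] sum_product sum.cartesian_product
      by (rule sum.cong) (auto simp: ad_def ymono_add)
    also have "\<dots> = (\<Sum>e\<in>E. \<Sum>p\<in>{p \<in> E1 \<times> E2. ad p = e}. C1 (fst p) * C2 (snd p) * ymono m (ad p) y)"
      by (rule sum.group[symmetric]) (use 1 2 fE in \<open>auto simp: E_def\<close>)
    also have "\<dots> = (\<Sum>e\<in>E. C e * ymono m e y)"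
      unfolding C_def sum_distrib_right by (rule sum.cong, simp, rule sum.cong) auto
    finally show ?thesis .
  qed
  then show ?thesis unfolding rep_def using fE sE by blast
qed

lemma rep_polyfun:
  "polyfun 2 (m+1) (aa m) bb f \<Longrightarrow> rep m (\<lambda>y. f (Nu m (\<lambda>_. 1) y))"
proof (induction rule: polyfun.induct)
  case (pf_const c)
  show ?case unfolding rep_def
    by (intro exI[of _ "{\<lambda>_. 0}"] exI[of _ "\<lambda>_. c"]) (simp add: ymono_def)
next
  case (pf_coord i j r s)
  then have r: "r = 0" by simp
  from ij_cases[OF pf_coord(1)] show ?case
  proof
    assume i: "i = 0"
    then have s: "s < m" using pf_coord by simp
    define c where "c = Nu m (\<lambda>_. 1) (\<lambda>_. 0) 0 j $$ (0, s)"
    have "Nu m (\<lambda>_. 1) y i j $$ (r, s) = c" for y using i r s unfolding c_def Nu_def by simp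
    then show ?case unfolding rep_def
      by (intro exI[of _ "{\<lambda>_. 0}"] exI[of _ "\<lambda>_. c"]) (simp add: ymono_def)
  next
    assume i: "i = 1"
    then have s: "s = 0" using pf_coord by simp
    define e where "e = (\<lambda>i. if i = j then 1 else 0 :: nat)"
    have jm: "j \<le> m" using pf_coord by simp
    have "ymono m e y = y j" for y
    proof -
      have "ymono m e y = (\<Prod>i\<in>{..m}. if i = j then y i else 1)"
        unfolding ymono_def e_def by (rule prod.cong) auto
      also have "\<dots> = y j" using jm by (simp add: prod.delta)
      finally show ?thesis .
    qed
    moreover have "Nu m (\<lambda>_. 1) y i j $$ (r, s) = y j" for y using i r s unfolding Nu_def by simp
    ultimately show ?case unfolding rep_def using jm
      by (intro exI[of _ "{e}"] exI[of _ "\<lambda>_. 1"]) (auto simp: e_def)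
  qed
next
  case (pf_add f g) then show ?case using rep_add[OF pf_add.IH] by simp
next
  case (pf_mult f g) then show ?case using rep_mult[OF pf_mult.IH] by simp
qed


definition deg :: "nat \<Rightarrow> (nat \<Rightarrow> nat) \<Rightarrow> nat" where "deg m e = (\<Sum>i\<le>m. e i)"

lemma ymono_scale: "ymono m e (\<lambda>i. l * y i) = l ^ deg m e * ymono m e y"
  unfolding ymono_def deg_def by (simp add: power_mult_distrib prod.distrib power_sum)

lemma homog_extract:
  assumes fin: "finite E" and rp: "\<forall>y. \<phi> y = (\<Sum>e\<in>E. C e * ymono m e y)"
    and hom: "\<forall>l y. l \<noteq> 0 \<longrightarrow> \<phi> (\<lambda>i. l * y i) = l ^ k * \<phi> y"
  shows "\<phi> y = (\<Sum>e\<in>{e\<in>E. deg m e = k}. C e * ymono m e y)"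
proof -
  define p where "p = (\<Sum>e\<in>E. Polynomial.monom (C e * ymono m e y) (deg m e)) - Polynomial.monom (\<phi> y) k"
  have "poly p l = 0" if "l \<in> UNIV - {0}" for l
  proof -
    have "poly p l = (\<Sum>e\<in>E. C e * ymono m e y * l ^ deg m e) - \<phi> y * l ^ k"
      unfolding p_def by (simp add: poly_sum poly_monom)
    also have "(\<Sum>e\<in>E. C e * ymono m e y * l ^ deg m e) = \<phi> (\<lambda>i. l * y i)"
      unfolding rp[rule_format] ymono_scale by (rule sum.cong) auto
    also have "\<dots> = l ^ k * \<phi> y" using hom that by auto
    finally show ?thesis by simp
  qed
  moreover have "infinite (UNIV - {0 :: complex})" by (simp add: infinite_UNIV_char_0)
  ultimately have "p = 0" using poly_inf_zero by blast
  then have "coeff p k = 0" by simp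
  then have "(\<Sum>e\<in>E. if deg m e = k then C e * ymono m e y else 0) = \<phi> y"
    unfolding p_def by (simp add: coeff_sum coeff_monom)
  then show ?thesis using sum.inter_filter[OF fin, of "\<lambda>e. C e * ymono m e y" "\<lambda>e. deg m e = k"] by simp
qed

lemma finite_expvecs: "finite (expvecs m k)"
proof -
  have "expvecs m k \<subseteq> (\<lambda>f i. if i \<le> m then f i else 0) ` ({..m} \<rightarrow>\<^sub>E {..k})"
  proof
    fix e assume e: "e \<in> expvecs m k"
    have le: "e i \<le> k" if "i \<le> m" for i
    proof -
      have "e i \<le> (\<Sum>i\<le>m. e i)" by (rule member_le_sum) (use that in auto)
      then show ?thesis using e unfolding expvecs_def by simp
    qed
    have "e = (\<lambda>i. if i \<le> m then restrict e {..m} i else 0)"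
      using e unfolding expvecs_def by (auto simp: fun_eq_iff)
    moreover have "restrict e {..m} \<in> {..m} \<rightarrow>\<^sub>E {..k}" using le by auto
    ultimately show "e \<in> (\<lambda>f i. if i \<le> m then f i else 0) ` ({..m} \<rightarrow>\<^sub>E {..k})" by blast
  qed
  moreover have "finite ({..m} \<rightarrow>\<^sub>E {..k::nat})" by (simp add: finite_PiE)
  ultimately show ?thesis using finite_subset by blast
qed

lemma expvecs_le: "e \<in> expvecs m k \<Longrightarrow> e i \<le> k"
proof (cases "i \<le> m")
  case True
  assume e: "e \<in> expvecs m k"
  have "e i \<le> (\<Sum>i\<le>m. e i)" by (rule member_le_sum) (use True in auto)
  then show ?thesis using e unfolding expvecs_def by simp
next
  case False
  assume e: "e \<in> expvecs m k"
  then show ?thesis using False unfolding expvecs_def by auto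
qed

lemma digits_bound: "(\<forall>i\<le>n. e i < N) \<Longrightarrow> (\<Sum>i\<le>n. e i * N ^ i) < (N::nat) ^ Suc n"
proof (induction n)
  case 0 then show ?case by simp
next
  case (Suc n)
  then have IH: "(\<Sum>i\<le>n. e i * N ^ i) < N ^ Suc n" by simp
  have "Suc (e (Suc n)) \<le> N" using Suc.prems by (simp add: Suc_leI)
  then have "Suc (e (Suc n)) * N ^ Suc n \<le> N * N ^ Suc n" by (rule mult_le_mono1)
  then show ?case using IH by simp
qed

lemma digits_inj:
  "(\<forall>i\<le>n. e i < N) \<Longrightarrow> (\<forall>i\<le>n. e' i < N) \<Longrightarrow> (\<Sum>i\<le>n. e i * N ^ i) = (\<Sum>i\<le>n. e' i * (N::nat) ^ i)
   \<Longrightarrow> \<forall>i\<le>n. e i = e' i"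
proof (induction n)
  case 0 then show ?case by simp
next
  case (Suc n)
  define M where "M = N ^ Suc n"
  define A where "A = (\<Sum>i\<le>n. e i * N ^ i)"
  define A' where "A' = (\<Sum>i\<le>n. e' i * N ^ i)"
  have A: "A < M" unfolding A_def M_def by (rule digits_bound) (use Suc.prems in simp)
  have A': "A' < M" unfolding A'_def M_def by (rule digits_bound) (use Suc.prems in simp)
  have eq: "A + e (Suc n) * M = A' + e' (Suc n) * M" using Suc.prems(3) unfolding A_def A'_def M_def by simp
  have "(A + e (Suc n) * M) mod M = A" using A by simp
  moreover have "(A' + e' (Suc n) * M) mod M = A'" using A' by simp
  ultimately have AA: "A = A'" using eq by simp
  have "M > 0" using A by simp
  then have top: "e (Suc n) = e' (Suc n)" using eq AA by simp
  have "\<forall>i\<le>n. e i = e' i" using Suc.IH Suc.prems AA unfolding A_def A'_def by simp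
  then show ?case using top le_Suc_eq by auto
qed

lemma kron_indep:
  assumes z: "\<forall>y. (\<Sum>e\<in>expvecs m k. a e * ymono m e y) = 0"
  shows "\<forall>e\<in>expvecs m k. a e = 0"
proof
  fix e0 assume e0: "e0 \<in> expvecs m k"
  define N where "N = Suc k"
  define code where "code = (\<lambda>e. \<Sum>i\<le>m. e i * N ^ i)"
  have cinj: "e = e'" if "e \<in> expvecs m k" "e' \<in> expvecs m k" "code e = code e'" for e e'
  proof -
    have "\<forall>i\<le>m. e i < N" "\<forall>i\<le>m. e' i < N" using expvecs_le[OF that(1)] expvecs_le[OF that(2)]
      unfolding N_def by (auto simp: less_Suc_eq_le)
    then have "\<forall>i\<le>m. e i = e' i" using digits_inj[of m e N e'] that(3) unfolding code_def by simp
    moreover have "\<forall>i>m. e i = e' i" using that(1,2) unfolding expvecs_def by auto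
    ultimately show ?thesis by (metis ext not_le)
  qed
  define p where "p = (\<Sum>e\<in>expvecs m k. Polynomial.monom (a e) (code e))"
  have "poly p t = 0" for t
  proof -
    have "ymono m e (\<lambda>i. t ^ (N ^ i)) = t ^ code e" for e
      unfolding ymono_def code_def by (simp add: power_mult[symmetric] power_sum mult.commute)
    then show ?thesis using z[rule_format, of "\<lambda>i. t ^ (N ^ i)"] unfolding p_def
      by (simp add: poly_sum poly_monom mult.commute)
  qed
  then have "p = 0" using poly_all_0_iff_0 by blast
  then have "coeff p (code e0) = 0" by simp
  moreover have "coeff p (code e0) = (\<Sum>e\<in>expvecs m k. if e = e0 then a e else 0)"
    unfolding p_def coeff_sum coeff_monom by (rule sum.cong) (use cinj e0 in auto)
  moreover have "\<dots> = a e0" using e0 finite_expvecs by (simp add: sum.delta')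
  ultimately show "a e0 = 0" by simp
qed


lemma polyfun_power: "polyfun p q a b f \<Longrightarrow> polyfun p q a b (\<lambda>V. f V ^ n)"
proof (induction n)
  case 0 then show ?case using pf_const[of p q a b 1] by simp
next
  case (Suc n) then show ?case using pf_mult[OF Suc.prems Suc.IH[OF Suc.prems]] by simp
qed

lemma polyfun_monomsum: "polyfun 2 (m+1) (aa m) bb (\<lambda>V. \<Sum>e\<in>expvecs m k. c e * monom m (FF m) e V)"
  unfolding monom_def
  by (intro polyfun_sum finite_expvecs pf_mult pf_const polyfun_prod polyfun_power polyfun_FF) auto

definition Dl :: "nat \<Rightarrow> (nat \<Rightarrow> nat) \<Rightarrow> complex" where "Dl m e = (\<Prod>i\<le>m. dl m i ^ e i)"

lemma Dl_nz: "Dl m e \<noteq> 0"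
  unfolding Dl_def using dl_nz by (simp add: prod_zero_iff)

lemma monom_N: "monom m (FF m) e (Nu m (\<lambda>_. 1) y) = Dl m e * ymono m e y"
  unfolding monom_def Dl_def ymono_def FF_N by (simp add: power_mult_distrib prod.distrib mult.commute)

lemma indep_main:
  assumes z: "\<forall>V\<in>Rep 2 (m+1) (aa m) bb. (\<Sum>e\<in>expvecs m k. c e * monom m (FF m) e V) = 0"
  shows "\<forall>e\<in>expvecs m k. c e = 0"
proof -
  have "\<forall>y. (\<Sum>e\<in>expvecs m k. (c e * Dl m e) * ymono m e y) = 0"
  proof
    fix y
    show "(\<Sum>e\<in>expvecs m k. (c e * Dl m e) * ymono m e y) = 0"
      using z[rule_format, OF Nu_Rep[of m "\<lambda>_. 1" y]] unfolding monom_N by (simp add: mult.assoc)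
  qed
  then have "\<forall>e\<in>expvecs m k. c e * Dl m e = 0" by (rule kron_indep)
  then show ?thesis using Dl_nz by simp
qed

lemma span_main:
  assumes f: "f \<in> SI 2 (m+1) (aa m) bb k"
  shows "\<exists>c. \<forall>V\<in>Rep 2 (m+1) (aa m) bb. f V = (\<Sum>e\<in>expvecs m k. c e * monom m (FF m) e V)"
proof -
  obtain E C where EC: "finite E" "\<forall>e\<in>E. \<forall>i>m. e i = 0" "\<forall>y. f (Nu m (\<lambda>_. 1) y) = (\<Sum>e\<in>E. C e * ymono m e y)"
    using rep_polyfun[OF SI_D(2)[OF f]] unfolding rep_def by blast
  have hom: "\<forall>l y. l \<noteq> 0 \<longrightarrow> f (Nu m (\<lambda>_. 1) (\<lambda>i. l * y i)) = l ^ k * f (Nu m (\<lambda>_. 1) y)"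
    using step3[OF _ f] by blast
  define E' where "E' = {e\<in>E. deg m e = k}"
  have sub: "E' \<subseteq> expvecs m k" unfolding E'_def expvecs_def deg_def using EC(2) by auto
  define C' where "C' = (\<lambda>e. if e \<in> E' then C e else 0)"
  have fN: "f (Nu m (\<lambda>_. 1) y) = (\<Sum>e\<in>expvecs m k. C' e * ymono m e y)" for y
  proof -
    have "f (Nu m (\<lambda>_. 1) y) = (\<Sum>e\<in>E'. C e * ymono m e y)"
      unfolding E'_def by (rule homog_extract[OF EC(1) EC(3) hom])
    also have "\<dots> = (\<Sum>e\<in>expvecs m k. C' e * ymono m e y)"
      unfolding C'_def by (rule sum_extend[OF finite_expvecs sub, symmetric])
    finally show ?thesis .
  qed
  define c where "c = (\<lambda>e. C' e / Dl m e)"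
  have onG: "f V = (\<Sum>e\<in>expvecs m k. c e * monom m (FF m) e V)"
    if V: "V \<in> Rep 2 (m+1) (aa m) bb" and nz: "\<forall>j\<le>m. FF m j V \<noteq> 0" for V
  proof -
    obtain \<beta> y where BY: "\<beta> \<noteq> 0" "\<forall>k f. f \<in> SI 2 (m+1) (aa m) bb k \<longrightarrow> f V = \<beta> ^ k * f (Nu m (\<lambda>_. 1) y)"
      using chain[OF V nz] by blast
    have FFV: "FF m i V = \<beta> * (y i * dl m i)" if "i \<le> m" for i
      using BY(2) FF_SI[OF that] FF_N by (metis power_one_right)
    have mon: "monom m (FF m) e V = \<beta> ^ k * (Dl m e * ymono m e y)" if e: "e \<in> expvecs m k" for e
    proof -
      have "monom m (FF m) e V = (\<Prod>i\<le>m. (\<beta> * (y i * dl m i)) ^ e i)"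
        unfolding monom_def by (rule prod.cong) (auto simp: FFV)
      also have "\<dots> = \<beta> ^ (\<Sum>i\<le>m. e i) * (Dl m e * ymono m e y)"
        unfolding Dl_def ymono_def by (simp add: power_mult_distrib prod.distrib power_sum mult.commute)
      finally show ?thesis using e unfolding expvecs_def by simp
    qed
    have "(\<Sum>e\<in>expvecs m k. c e * monom m (FF m) e V) = (\<Sum>e\<in>expvecs m k. \<beta> ^ k * (C' e * ymono m e y))"
      by (rule sum.cong) (auto simp: mon c_def Dl_nz)
    also have "\<dots> = \<beta> ^ k * f (Nu m (\<lambda>_. 1) y)" unfolding fN by (simp add: sum_distrib_left)
    also have "\<dots> = f V" using BY(2) f by simp
    finally show ?thesis by simp
  qed
  obtain W where W: "W \<in> Rep 2 (m+1) (aa m) bb" "\<forall>j\<le>m. FF m j W \<noteq> 0" using G_nonempty by blast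
  have hpf: "polyfun 2 (m+1) (aa m) bb (\<lambda>V. \<Prod>j\<in>{..m}. FF m j V)"
    by (intro polyfun_prod polyfun_FF) auto
  have "f V = (\<Sum>e\<in>expvecs m k. c e * monom m (FF m) e V)" if V: "V \<in> Rep 2 (m+1) (aa m) bb" for V
  proof (rule dense_eq[OF SI_D(2)[OF f] polyfun_monomsum hpf W(1) _ _ V])
    show "(\<Prod>j\<in>{..m}. FF m j W) \<noteq> 0" using W(2) by (simp add: prod_zero_iff)
    fix V' assume "V' \<in> Rep 2 (m+1) (aa m) bb" "(\<Prod>j\<in>{..m}. FF m j V') \<noteq> 0"
    then show "f V' = (\<Sum>e\<in>expvecs m k. c e * monom m (FF m) e V')"
      by (intro onG) (auto simp: prod_zero_iff)
  qed
  then show ?thesis by blast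
qed

theorem mainTheorem7:
  fixes m :: nat
  assumes "m \<ge> 1"
  defines "a \<equiv> (\<lambda>i::nat. if i = 0 then m else 1)"
      and "b \<equiv> (\<lambda>j::nat. 1::nat)"
  shows "\<exists>F :: nat \<Rightarrow> qrep \<Rightarrow> complex.
     (\<forall>i\<le>m. F i \<in> SI 2 (m+1) a b 1) \<and>
     (\<forall>k. (\<forall>c :: (nat \<Rightarrow> nat) \<Rightarrow> complex.
              (\<forall>V \<in> Rep 2 (m+1) a b. (\<Sum>e\<in>expvecs m k. c e * monom m F e V) = 0)
              \<longrightarrow> (\<forall>e\<in>expvecs m k. c e = 0))
        \<and> (\<forall>f \<in> SI 2 (m+1) a b k. \<exists>c :: (nat \<Rightarrow> nat) \<Rightarrow> complex.
              \<forall>V \<in> Rep 2 (m+1) a b. f V = (\<Sum>e\<in>expvecs m k. c e * monom m F e V)))"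
proof -
  have ab: "a = aa m" "b = bb" unfolding a_def b_def aa_def bb_def by auto
  show ?thesis unfolding ab
  proof (intro exI[of _ "FF m"] conjI allI impI ballI)
    fix i assume "i \<le> m" then show "FF m i \<in> SI 2 (m + 1) (aa m) bb 1" by (rule FF_SI)
  next
    fix k c e
    assume "\<forall>V\<in>Rep 2 (m + 1) (aa m) bb. (\<Sum>e\<in>expvecs m k. c e * monom m (FF m) e V) = 0"
      "e \<in> expvecs m k"
    then show "c e = 0" using indep_main by blast
  next
    fix k f assume "f \<in> SI 2 (m + 1) (aa m) bb k"
    then show "\<exists>c. \<forall>V\<in>Rep 2 (m + 1) (aa m) bb. f V = (\<Sum>e\<in>expvecs m k. c e * monom m (FF m) e V)"
      by (rule span_main)
  qed
qed

end
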